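(* Let $\alpha$ be a set and $\odot:\alpha\times\alpha\to\alpha$. Calls $\mathrm{reduce}(\odot,\mathit{rdd})$ have deterministic outcomes if and only if $(\alpha,\odot)$ is a commutative semigroup, i.e. $\odot$ is associative and commutative.
   Context: Lists are finite; $\mathbin{+\!\!+}$ is concatenation. $\mathrm{foldl}(f,b,[\,])=b$, $\mathrm{foldl}(f,b,[x_1,\dots,x_n])=f(\cdots f(f(b,x_1),x_2)\cdots,x_n)$; for a nonempty list, $\mathrm{reducel}(f,[x_1,\dots,x_n])=\mathrm{foldl}(f,x_1,[x_2,\dots,x_n])$. An RDD is a list of lists. A partitioning (for reduce) is a function $P$ sending each nonempty list $L$ to an RDD obtained by splitting $L$ into consecutive nonempty pieces $p_1,\dots,p_n$ with $p_1\mathbin{+\!\!+}\cdots\mathbin{+\!\!+}p_n=L$ and then arbitrarily permuting $[p_1,\dots,p_n]$. $\mathrm{reduce}_{\mathrm{det}}(\odot,[q_1,\dots,q_m])=\mathrm{reducel}(\odot,[\mathrm{reducel}(\odot,q_1),\dots,\mathrm{reducel}(\odot,q_m)])$. Calls $\mathrm{reduce}(\odot,\mathit{rdd})$ have deterministic outcomes if $\mathrm{reduce}_{\mathrm{det}}(\odot,P(L))=\mathrm{reducel}(\odot,L)$ for all nonempty lists $L$ over $\alpha$ and all such partitionings $P$. *)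

theory Defs
  imports Main "HOL-Library.Multiset"
begin

text \<open>reducel f [x1,...,xn] = foldl f x1 [x2,...,xn]; only used on nonempty lists.\<close>
definition reducel :: "('a \<Rightarrow> 'a \<Rightarrow> 'a) \<Rightarrow> 'a list \<Rightarrow> 'a" where
  "reducel f xs = foldl f (hd xs) (tl xs)"

text \<open>An RDD R arises from L by splitting L into consecutive nonempty pieces
  and arbitrarily permuting the list of pieces.\<close>
definition is_partition_of :: "'a list list \<Rightarrow> 'a list \<Rightarrow> bool" where
  "is_partition_of R L \<longleftrightarrow>
     (\<exists>ps. (\<forall>p\<in>set ps. p \<noteq> []) \<and> concat ps = L \<and> mset R = mset ps)"

definition partitioning :: "('a list \<Rightarrow> 'a list list) \<Rightarrow> bool" where
  "partitioning P \<longleftrightarrow> (\<forall>L. L \<noteq> [] \<longrightarrow> is_partition_of (P L) L)"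

definition reduce_det :: "('a \<Rightarrow> 'a \<Rightarrow> 'a) \<Rightarrow> 'a list list \<Rightarrow> 'a" where
  "reduce_det f qs = reducel f (map (reducel f) qs)"

definition deterministic_reduce :: "('a \<Rightarrow> 'a \<Rightarrow> 'a) \<Rightarrow> bool" where
  "deterministic_reduce f \<longleftrightarrow>
     (\<forall>P. partitioning P \<longrightarrow> (\<forall>L. L \<noteq> [] \<longrightarrow> reduce_det f (P L) = reducel f L))"

end

theory Submission
  imports Defs
begin

lemma foldl_assoc_shift:
  assumes A: "\<forall>x y z. f (f x y) z = f x (f y z)"
  shows "foldl f (f a b) ys = f a (foldl f b ys)"
  using A by (induction ys arbitrary: b) auto

lemma reducel_append:
  assumes A: "\<forall>x y z. f (f x y) z = f x (f y z)"
    and "xs \<noteq> []" "ys \<noteq> []"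
  shows "reducel f (xs @ ys) = f (reducel f xs) (reducel f ys)"
proof -
  obtain y ys' where ys: "ys = y # ys'" using assms(3) by (cases ys) auto
  have "reducel f (xs @ ys) = foldl f (reducel f xs) ys"
    using assms(2) by (cases xs) (auto simp: reducel_def)
  also have "\<dots> = f (reducel f xs) (reducel f ys)"
    using foldl_assoc_shift[OF A] by (simp add: ys reducel_def)
  finally show ?thesis .
qed

definition hopt :: "('a \<Rightarrow> 'a \<Rightarrow> 'a) \<Rightarrow> 'a \<Rightarrow> 'a option \<Rightarrow> 'a option" where
  "hopt f x oa = (case oa of None \<Rightarrow> Some x | Some a \<Rightarrow> Some (f a x))"

lemma fold_hopt: "fold (hopt f) xs (Some a) = Some (foldl f a xs)"
  by (induction xs arbitrary: a) (auto simp: hopt_def)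

lemma reducel_perm:
  assumes A: "\<forall>x y z. f (f x y) z = f x (f y z)" and C: "\<forall>x y. f x y = f y x"
    and "xs \<noteq> []" "mset xs = mset ys"
  shows "reducel f xs = reducel f ys"
proof -
  have ys: "ys \<noteq> []" using assms by auto
  have comm: "hopt f x \<circ> hopt f y = hopt f y \<circ> hopt f x" for x y
  proof
    fix oa show "(hopt f x \<circ> hopt f y) oa = (hopt f y \<circ> hopt f x) oa"
      proof (cases oa)
      case None then show ?thesis using C by (simp add: hopt_def)
    next
      case (Some a)
      have "f (f a y) x = f (f a x) y" using A C by metis
      then show ?thesis using Some by (simp add: hopt_def)
    qed
  qed
  have "fold (hopt f) xs = fold (hopt f) ys"
    by (rule fold_multiset_equiv) (use comm assms in auto)
  moreover have R: "fold (hopt f) zs None = Some (reducel f zs)" if "zs \<noteq> []" for zs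
    using that by (cases zs) (auto simp: reducel_def hopt_def fold_hopt)
  ultimately have "Some (reducel f xs) = Some (reducel f ys)"
    using R[OF assms(3)] R[OF ys] by simp
  then show ?thesis by simp
qed

lemma reducel_concat:
  assumes A: "\<forall>x y z. f (f x y) z = f x (f y z)"
  shows "ps \<noteq> [] \<Longrightarrow> \<forall>p\<in>set ps. p \<noteq> [] \<Longrightarrow>
    reducel f (map (reducel f) ps) = reducel f (concat ps)"
proof (induction ps)
  case Nil then show ?case by simp
next
  case (Cons p ps)
  show ?case
  proof (cases "ps = []")
    case True then show ?thesis by (simp add: reducel_def)
  next
    case False
    then have ne: "concat ps \<noteq> []" using Cons.prems by (cases ps) auto
    have "reducel f (map (reducel f) (p # ps)) = reducel f ([reducel f p] @ map (reducel f) ps)"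
      by simp
    also have "\<dots> = f (reducel f p) (reducel f (map (reducel f) ps))"
      using reducel_append[OF A, of "[reducel f p]" "map (reducel f) ps"] False
      by (simp add: reducel_def)
    also have "\<dots> = f (reducel f p) (reducel f (concat ps))"
      using Cons False by simp
    also have "\<dots> = reducel f (concat (p # ps))"
      using reducel_append[OF A, of p "concat ps"] Cons.prems ne by simp
    finally show ?thesis .
  qed
qed

lemma special_partitioning:
  assumes "is_partition_of R L0" "L0 \<noteq> []"
  shows "partitioning (\<lambda>L. if L = L0 then R else [L])"
  unfolding partitioning_def
proof (intro allI impI)
  fix L :: "'a list" assume "L \<noteq> []"
  show "is_partition_of (if L = L0 then R else [L]) L"
  proof (cases "L = L0")
    case True then show ?thesis using assms(1) by simp
  next
    case False
    have "is_partition_of [L] L" unfolding is_partition_of_def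
      using \<open>L \<noteq> []\<close> by (intro exI[of _ "[L]"]) simp
    then show ?thesis using False by simp
  qed
qed

theorem corollary2:
  fixes f :: "'a \<Rightarrow> 'a \<Rightarrow> 'a"
  shows "deterministic_reduce f \<longleftrightarrow>
    (\<forall>x y z. f (f x y) z = f x (f y z)) \<and> (\<forall>x y. f x y = f y x)"
proof
  assume D: "deterministic_reduce f"
  have "f (f x y) z = f x (f y z)" for x y z
  proof -
    have "is_partition_of [[x],[y,z]] [x,y,z]"
      unfolding is_partition_of_def by (intro exI[of _ "[[x],[y,z]]"]) auto
    from special_partitioning[OF this]
    have "reduce_det f ((\<lambda>L. if L = [x,y,z] then [[x],[y,z]] else [L]) [x,y,z]) = reducel f [x,y,z]"
      using D unfolding deterministic_reduce_def by blast
    then have "reduce_det f [[x],[y,z]] = reducel f [x,y,z]" by simp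
    then show ?thesis by (simp add: reduce_det_def reducel_def)
  qed
  moreover have "f x y = f y x" for x y
  proof -
    have "is_partition_of [[y],[x]] [x,y]"
      unfolding is_partition_of_def by (intro exI[of _ "[[x],[y]]"]) auto
    from special_partitioning[OF this]
    have "reduce_det f ((\<lambda>L. if L = [x,y] then [[y],[x]] else [L]) [x,y]) = reducel f [x,y]"
      using D unfolding deterministic_reduce_def by blast
    then have "reduce_det f [[y],[x]] = reducel f [x,y]" by simp
    then show ?thesis by (simp add: reduce_det_def reducel_def)
  qed
  ultimately show "(\<forall>x y z. f (f x y) z = f x (f y z)) \<and> (\<forall>x y. f x y = f y x)" by blast
next
  assume "(\<forall>x y z. f (f x y) z = f x (f y z)) \<and> (\<forall>x y. f x y = f y x)"
  then have A: "\<forall>x y z. f (f x y) z = f x (f y z)" and C: "\<forall>x y. f x y = f y x" by auto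
  show "deterministic_reduce f" unfolding deterministic_reduce_def
  proof (intro allI impI)
    fix P :: "'a list \<Rightarrow> 'a list list" and L :: "'a list"
    assume P: "partitioning P" and L: "L \<noteq> []"
    then obtain ps where ps: "\<forall>p\<in>set ps. p \<noteq> []" "concat ps = L" "mset (P L) = mset ps"
      unfolding partitioning_def is_partition_of_def by blast
    have psne: "ps \<noteq> []" using ps L by auto
    have "mset (map (reducel f) ps) = mset (map (reducel f) (P L))"
      using ps(3) by simp
    then have "reducel f (map (reducel f) ps) = reducel f (map (reducel f) (P L))"
      using reducel_perm[OF A C] psne by simp
    then show "reduce_det f (P L) = reducel f L"
      using reducel_concat[OF A psne ps(1)] ps(2) by (simp add: reduce_det_def)
  qed
qed

end
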